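(* Assume $\alpha\neq1$ and $\mu\neq0$. Take $c_k=1$ and $t_k=k$ for all $k\ge0$, and choose the constants $a_k$ recursively by $a_k=\exp(\mu_k)$ for $k\ge1$, where $\mu_k$ is the location parameter of $\log Z_k$ (which depends only on $a_1,\dots,a_{k-1}$). Then for every $k\ge1$, $Z_k\le Y_k$ almost surely and $\log Z_k\sim\mathcal S(\alpha,\beta,\sigma_k,\mu_k)$ with $$\mu_k=\mu+\log\frac{e^{\mu k}-1}{e^{\mu}-1},\qquad \sigma_k^\alpha=\sigma^\alpha\left(1+\sum_{j=1}^{k-1}\left(1-\frac{e^{\mu j}-1}{e^{\mu k}-1}\right)^\alpha\right).$$
   Context: Stable laws: for $\alpha^*\in(0,2]$, $\beta^*\in[-1,1]$, $\sigma^*>0$, $\mu^*\in\mathbb R$, write $Z\sim\mathcal S(\alpha^*,\beta^*,\sigma^*,\mu^* )$ if the real random variable $Z$ has characteristic function $\mathbb E e^{i\theta Z}=\exp\{i\theta\mu^*-|\sigma^*\theta|^{\alpha^*}(1-i\beta^*\operatorname{sgn}(\theta)\tan\frac{\pi\alpha^*}{2})\}$ when $\alpha^*\neq1$, and $\mathbb E e^{i\theta Z}=\exp\{i\theta\mu^*-|\sigma^*\theta|(1+i\beta^*\frac{2}{\pi}\operatorname{sgn}(\theta)\log|\theta|)\}$ when $\alpha^*=1$. Wealth process: on a probability space $(\Omega,\mathcal F,\mathbb P)$, $X:[0,\infty)\times\Omega\to(0,\infty)$ is a process such that $\log X$ is a Lévy process (càdlàg paths, independent increments) with, for all $0\le s<t$,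 $\log\frac{X(t)}{X(s)}\sim\mathcal S(\alpha,\beta,\sigma(t-s)^{1/\alpha},\mu(t-s))$, where $\alpha\in(0,2]$, $\beta\in[-1,1]$, $\sigma>0$, $\mu\in\mathbb R$ are fixed. Regular investing: given times $0=t_0<t_1<\cdots$ and amounts $c_k>0$ invested at $t_k$, set $X_k=X(t_k)/X(t_{k-1})$ for $k\ge1$, and define the terminal wealth recursively by $Y_1=c_0X_1$, $Y_k=X_k(Y_{k-1}+c_{k-1})$ for $k\ge2$. Lower bound process: given constants $a_{k}>0$ ($k\ge1$), set $b_{k}=\frac{a_{k}}{a_{k}+c_{k}}$, $Z_1=Y_1$, and $Z_k=X_k(a_{k-1}+c_{k-1})\left(\frac{Z_{k-1}}{a_{k-1}}\right)^{b_{k-1}}$ for $k\ge2$. *)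

theory Defs
  imports "HOL-Probability.Probability"
begin

definition stable_cf :: "real \<Rightarrow> real \<Rightarrow> real \<Rightarrow> real \<Rightarrow> real \<Rightarrow> complex" where
  "stable_cf \<alpha> \<beta> \<sigma> \<mu> \<theta> =
     (if \<alpha> \<noteq> 1 then
        exp (\<i> * complex_of_real (\<theta> * \<mu>)
             - complex_of_real (\<bar>\<sigma> * \<theta>\<bar> powr \<alpha>)
               * (1 - \<i> * complex_of_real (\<beta> * sgn \<theta> * tan (pi * \<alpha> / 2))))
      else
        exp (\<i> * complex_of_real (\<theta> * \<mu>)
             - complex_of_real \<bar>\<sigma> * \<theta>\<bar>
               * (1 + \<i> * complex_of_real (\<beta> * (2 / pi) * sgn \<theta> * ln \<bar>\<theta>\<bar>))))"

definition has_stable_law :: "'a measure \<Rightarrow> ('a \<Rightarrow> real) \<Rightarrow> real \<Rightarrow> real \<Rightarrow> real \<Rightarrow> real \<Rightarrow> bool" where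
  "has_stable_law M Z \<alpha> \<beta> \<sigma> \<mu> \<longleftrightarrow>
     Z \<in> borel_measurable M \<and>
     (\<forall>\<theta>. char (distr M borel Z) \<theta> = stable_cf \<alpha> \<beta> \<sigma> \<mu> \<theta>)"

definition stable_location :: "'a measure \<Rightarrow> ('a \<Rightarrow> real) \<Rightarrow> real" where
  "stable_location M Z = (THE \<mu>. \<exists>\<alpha> \<beta> \<sigma>. 0 < \<alpha> \<and> \<alpha> \<le> 2 \<and> -1 \<le> \<beta> \<and> \<beta> \<le> 1 \<and> 0 < \<sigma>
                               \<and> has_stable_law M Z \<alpha> \<beta> \<sigma> \<mu>)"

definition ret :: "(real \<Rightarrow> 'a \<Rightarrow> real) \<Rightarrow> (nat \<Rightarrow> real) \<Rightarrow> nat \<Rightarrow> 'a \<Rightarrow> real" where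
  "ret X t k \<omega> = X (t k) \<omega> / X (t (k - 1)) \<omega>"

text \<open>Terminal wealth Y_k (only meaningful for k >= 1).\<close>
fun Yw :: "(real \<Rightarrow> 'a \<Rightarrow> real) \<Rightarrow> (nat \<Rightarrow> real) \<Rightarrow> (nat \<Rightarrow> real) \<Rightarrow> nat \<Rightarrow> 'a \<Rightarrow> real" where
  "Yw X t c 0 \<omega> = 0"
| "Yw X t c (Suc 0) \<omega> = c 0 * ret X t 1 \<omega>"
| "Yw X t c (Suc (Suc k)) \<omega> = ret X t (Suc (Suc k)) \<omega> * (Yw X t c (Suc k) \<omega> + c (Suc k))"

text \<open>Lower bound process Z_k (only meaningful for k >= 1), with b_k = a_k / (a_k + c_k).\<close>
fun Zw :: "(real \<Rightarrow> 'a \<Rightarrow> real) \<Rightarrow> (nat \<Rightarrow> real) \<Rightarrow> (nat \<Rightarrow> real) \<Rightarrow> (nat \<Rightarrow> real) \<Rightarrow> nat \<Rightarrow> 'a \<Rightarrow> real" where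
  "Zw X t c a 0 \<omega> = 0"
| "Zw X t c a (Suc 0) \<omega> = Yw X t c (Suc 0) \<omega>"
| "Zw X t c a (Suc (Suc k)) \<omega> =
     ret X t (Suc (Suc k)) \<omega> * (a (Suc k) + c (Suc k))
       * (Zw X t c a (Suc k) \<omega> / a (Suc k)) powr (a (Suc k) / (a (Suc k) + c (Suc k)))"

end

theory Submission
  imports Defs "HOL-Analysis.Analysis"
begin


lemma char_distr_eq:
  assumes "f \<in> borel_measurable M"
  shows "char (distr M borel f) t = (CLINT x|M. iexp (t * f x))"
  using assms by (simp add: char_def integral_distr)

lemma (in prob_space) lin_char:
  fixes L :: "nat \<Rightarrow> 'a \<Rightarrow> real"
  assumes ind: "indep_vars (\<lambda>_. borel) L {..<n}"
  shows "char (distr M borel (\<lambda>\<omega>. (\<Sum>j<n. w j * L j \<omega>) + C)) t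
     = iexp (t * C) * (\<Prod>j<n. char (distr M borel (L j)) (w j * t))"
proof -
  have [measurable]: "\<And>j. j < n \<Longrightarrow> L j \<in> borel_measurable M"
    using ind unfolding indep_vars_def by auto
  have ind2: "indep_vars (\<lambda>_. borel) (\<lambda>j \<omega>. w j * L j \<omega>) {..<n}"
    by (rule indep_vars_compose2[OF ind]) auto
  have ms: "(\<lambda>\<omega>. \<Sum>j<n. w j * L j \<omega>) \<in> borel_measurable M" by measurable
  have "char (distr M borel (\<lambda>\<omega>. (\<Sum>j<n. w j * L j \<omega>) + C)) t
      = (CLINT x|M. iexp (t * ((\<Sum>j<n. w j * L j x) + C)))"
    by (rule char_distr_eq) (use ms in measurable)
  also have "\<dots> = (CLINT x|M. iexp (t * C) * iexp (t * (\<Sum>j<n. w j * L j x)))"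
    by (rule Bochner_Integration.integral_cong) (auto simp: distrib_left exp_add[symmetric] algebra_simps)
  also have "\<dots> = iexp (t * C) * (CLINT x|M. iexp (t * (\<Sum>j<n. w j * L j x)))"
    by simp
  also have "(CLINT x|M. iexp (t * (\<Sum>j<n. w j * L j x))) = char (distr M borel (\<lambda>\<omega>. \<Sum>j<n. w j * L j \<omega>)) t"
    by (rule char_distr_eq[symmetric]) (rule ms)
  also have "\<dots> = (\<Prod>j<n. char (distr M borel (\<lambda>\<omega>. w j * L j \<omega>)) t)"
    by (rule char_distr_sum[OF ind2])
  also have "\<dots> = (\<Prod>j<n. char (distr M borel (L j)) (w j * t))"
  proof (rule prod.cong[OF refl])
    fix j assume "j \<in> {..<n}"
    then have [measurable]: "L j \<in> borel_measurable M" by simp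
    show "char (distr M borel (\<lambda>\<omega>. w j * L j \<omega>)) t = char (distr M borel (L j)) (w j * t)"
      by (subst char_distr_eq, measurable, subst char_distr_eq, measurable) (simp add: mult.assoc mult.left_commute)
  qed
  finally show ?thesis .
qed

definition E :: "real \<Rightarrow> real \<Rightarrow> real \<Rightarrow> real \<Rightarrow> real \<Rightarrow> complex" where
  "E \<alpha> \<beta> s m \<theta> = exp (\<i> * complex_of_real (\<theta> * m)
     - complex_of_real (s * \<bar>\<theta>\<bar> powr \<alpha>) * (1 - \<i> * complex_of_real (\<beta> * sgn \<theta> * tan (pi * \<alpha> / 2))))"

lemma cf_scaled:
  assumes "\<alpha> \<noteq> 1" "0 < \<sigma>" "0 < w"
  shows "stable_cf \<alpha> \<beta> \<sigma> \<mu> (w * \<theta>) = E \<alpha> \<beta> (\<sigma> powr \<alpha> * w powr \<alpha>) (w * \<mu>) \<theta>"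
proof -
  have "\<bar>\<sigma> * (w * \<theta>)\<bar> powr \<alpha> = \<sigma> powr \<alpha> * w powr \<alpha> * \<bar>\<theta>\<bar> powr \<alpha>"
    using assms by (simp add: abs_mult powr_mult)
  moreover have "sgn (w * \<theta>) = sgn \<theta>" using assms by (simp add: sgn_mult)
  ultimately show ?thesis using assms unfolding stable_cf_def E_def
    by (simp add: algebra_simps)
qed

lemma E_mult: "E \<alpha> \<beta> s1 m1 \<theta> * E \<alpha> \<beta> s2 m2 \<theta> = E \<alpha> \<beta> (s1 + s2) (m1 + m2) \<theta>"
  unfolding E_def by (simp add: exp_add[symmetric] algebra_simps)

lemma E_zero: "E \<alpha> \<beta> 0 0 \<theta> = 1" unfolding E_def by simp

lemma E_prod: "(\<Prod>j\<in>A. E \<alpha> \<beta> (s j) (m j) \<theta>) = E \<alpha> \<beta> (\<Sum>j\<in>A. s j) (\<Sum>j\<in>A. m j) \<theta>"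
  by (induct A rule: infinite_finite_induct) (auto simp: E_mult E_zero)

lemma E_shift: "iexp (\<theta> * C) * E \<alpha> \<beta> s m \<theta> = E \<alpha> \<beta> s (m + C) \<theta>"
  unfolding E_def by (simp add: exp_add[symmetric] algebra_simps)

lemma cf_E:
  assumes "\<alpha> \<noteq> 1" "0 < \<sigma>" 
  shows "stable_cf \<alpha> \<beta> \<sigma> \<mu> \<theta> = E \<alpha> \<beta> (\<sigma> powr \<alpha>) \<mu> \<theta>"
  using cf_scaled[OF assms zero_less_one, of \<beta> \<mu> \<theta>] by simp




lemma norm_cf: "norm (stable_cf a b s m \<theta>) = exp (- (\<bar>s * \<theta>\<bar> powr a))"
  unfolding stable_cf_def by (auto simp: powr_one_gt_zero_iff)

lemma cf_loc_unique:
  assumes a: "\<alpha> \<noteq> 1" "0 < \<alpha>" "0 < \<sigma>" "0 < \<sigma>'"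
    and eq: "\<And>\<theta>. stable_cf \<alpha> \<beta> \<sigma> \<mu> \<theta> = stable_cf \<alpha>' \<beta>' \<sigma>' \<mu>' \<theta>"
  shows "\<mu> = \<mu>'"
proof -
  have n: "\<bar>\<sigma> * \<theta>\<bar> powr \<alpha> = \<bar>\<sigma>' * \<theta>\<bar> powr \<alpha>'" for \<theta>
    using arg_cong[OF eq[of \<theta>], of norm] by (simp add: norm_cf)
  have n1: "\<sigma> powr \<alpha> = \<sigma>' powr \<alpha>'" using n[of 1] a by simp
  have n2: "2 powr \<alpha> * \<sigma> powr \<alpha> = 2 powr \<alpha>' * \<sigma>' powr \<alpha>'" using n[of 2] a
    by (simp add: abs_mult powr_mult mult.commute)
  have "2 powr \<alpha> = (2::real) powr \<alpha>'" using n1 n2 a by simp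
  hence aa: "\<alpha>' = \<alpha>" by (simp add: powr_inj)
  have "(\<sigma> powr \<alpha>) powr (1/\<alpha>) = (\<sigma>' powr \<alpha>) powr (1/\<alpha>)" using n1 aa by simp
  hence ss: "\<sigma>' = \<sigma>" using a by (simp add: powr_powr)
  define K where "K = \<sigma> powr \<alpha>"
  have K: "K > 0" using a by (simp add: K_def)
  define c where "c = (\<beta> - \<beta>') * tan (pi * \<alpha> / 2)"
  define d where "d = \<mu> - \<mu>'"
  define g where "g \<theta> = \<theta> * d + K * \<theta> powr \<alpha> * c" for \<theta>
  have gint: "\<exists>n::int. g \<theta> = of_int (2 * n) * pi" if "\<theta> > 0" for \<theta>
  proof -
    have "E \<alpha> \<beta> K \<mu> \<theta> = E \<alpha> \<beta>' K \<mu>' \<theta>"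
      using eq[of \<theta>] cf_E[OF a(1) a(3)] cf_E[OF a(1) a(4)] aa ss K_def by metis
    hence "exp ((\<i> * complex_of_real (\<theta> * \<mu>)
     - complex_of_real (K * \<bar>\<theta>\<bar> powr \<alpha>) * (1 - \<i> * complex_of_real (\<beta> * sgn \<theta> * tan (pi * \<alpha> / 2))))
      - (\<i> * complex_of_real (\<theta> * \<mu>')
     - complex_of_real (K * \<bar>\<theta>\<bar> powr \<alpha>) * (1 - \<i> * complex_of_real (\<beta>' * sgn \<theta> * tan (pi * \<alpha> / 2))))) = 1"
      unfolding E_def exp_diff by simp
    then obtain n :: int where "Im ((\<i> * complex_of_real (\<theta> * \<mu>)
     - complex_of_real (K * \<bar>\<theta>\<bar> powr \<alpha>) * (1 - \<i> * complex_of_real (\<beta> * sgn \<theta> * tan (pi * \<alpha> / 2))))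
      - (\<i> * complex_of_real (\<theta> * \<mu>')
     - complex_of_real (K * \<bar>\<theta>\<bar> powr \<alpha>) * (1 - \<i> * complex_of_real (\<beta>' * sgn \<theta> * tan (pi * \<alpha> / 2))))) = of_int (2 * n) * pi"
      unfolding exp_eq_1 by blast
    then show ?thesis using that unfolding g_def c_def d_def
      by (intro exI[of _ n]) (simp add: algebra_simps)
  qed
  have "(g \<longlongrightarrow> 0 * d + K * 0 * c) (at_right 0)"
    unfolding g_def
    by (intro tendsto_intros tendsto_zero_powrI) (auto simp: a eventually_at_right_less intro: eventually_mono[OF eventually_at_right_less])
  hence "\<forall>\<^sub>F \<theta> in at_right 0. dist (g \<theta>) 0 < pi" by (simp add: tendsto_iff)
  hence "\<forall>\<^sub>F \<theta> in at_right 0. g \<theta> = 0"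
    using eventually_at_right_less[of "0::real"]
  proof eventually_elim
    case (elim \<theta>)
    then have th: "\<theta> > 0" "dist (g \<theta>) 0 < pi" by auto
    then obtain n :: int where gn: "g \<theta> = of_int (2 * n) * pi" using gint by blast
    have "\<bar>of_int (2 * n) * pi\<bar> < pi" using th gn by simp
    hence "\<bar>real_of_int (2*n)\<bar> < 1" by (simp add: abs_mult)
    hence "n = 0" by linarith
    thus "g \<theta> = 0" using gn by simp
  qed
  then obtain b where b: "b > 0" "\<And>y. 0 < y \<Longrightarrow> y < b \<Longrightarrow> g y = 0"
    unfolding eventually_at_right_field by auto
  define t where "t = b / 4"
  have t: "t > 0" "t < b" "2 * t < b" using b by (auto simp: t_def)
  have g1: "t * d + K * t powr \<alpha> * c = 0" using b(2)[of t] t by (simp add: g_def)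
  have g2: "2 * t * d + K * (2 powr \<alpha> * t powr \<alpha>) * c = 0" using b(2)[of "2*t"] t
    by (simp add: g_def powr_mult)
  have "K * t powr \<alpha> * c * (2 powr \<alpha> - 2) = 0" using g1 g2 by algebra
  moreover have "2 powr \<alpha> \<noteq> (2::real)" using a powr_inj[of 2 \<alpha> 1] by auto
  ultimately have "c = 0" using K t by simp
  hence "d = 0" using g1 t by simp
  thus ?thesis by (simp add: d_def)
qed




definition mloc :: "real \<Rightarrow> nat \<Rightarrow> real" where
  "mloc \<mu> n = \<mu> + ln ((exp (\<mu> * real n) - 1) / (exp \<mu> - 1))"
definition Ssum :: "real \<Rightarrow> real \<Rightarrow> nat \<Rightarrow> real" where
  "Ssum \<alpha> \<mu> n = 1 + (\<Sum>j::nat=1..n-1. (1 - (exp (\<mu> * real j) - 1) / (exp (\<mu> * real n) - 1)) powr \<alpha>)"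

lemma q_pos:
  assumes "\<mu> \<noteq> 0" "1 \<le> n"
  shows "(exp (\<mu> * real n) - 1) / (exp \<mu> - 1) > 0"
proof (cases "\<mu> > 0")
  case True
  hence "exp (\<mu> * real n) > 1" "exp \<mu> > 1" using assms by auto
  thus ?thesis by simp
next
  case False
  hence m: "\<mu> < 0" using assms by auto
  hence "\<mu> * real n < 0" using assms by (simp add: mult_neg_pos)
  hence "exp (\<mu> * real n) < 1" "exp \<mu> < 1" using m by auto
  thus ?thesis by (simp add: divide_neg_neg)
qed

lemma ratio_nonneg:
  assumes "\<mu> \<noteq> 0" "1 \<le> n" "j \<le> n"
  shows "(exp (\<mu> * real n) - exp (\<mu> * real j)) / (exp (\<mu> * real n) - 1) \<ge> 0"
proof (cases "\<mu> > 0")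
  case True
  hence "exp (\<mu> * real n) > 1" "exp (\<mu> * real j) \<le> exp (\<mu> * real n)" using assms by auto
  thus ?thesis by simp
next
  case False
  hence m: "\<mu> < 0" using assms by auto
  hence "\<mu> * real n < 0" using assms by (simp add: mult_neg_pos)
  moreover have "\<mu> * real n \<le> \<mu> * real j" using m assms by (simp add: mult_left_mono_neg)
  ultimately have "exp (\<mu> * real n) < 1" "exp (\<mu> * real n) \<le> exp (\<mu> * real j)" by auto
  thus ?thesis by (simp add: divide_nonpos_neg)
qed

lemma exp_suc: "exp (\<mu> * real (Suc n)) = exp \<mu> * exp (\<mu> * real n)"
  by (simp add: distrib_left exp_add mult.commute)

lemma alg_A:
  assumes "\<mu> \<noteq> 0" "1 \<le> n"
  shows "\<mu> + ln (exp (mloc \<mu> n) + 1) = mloc \<mu> (Suc n)"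
proof -
  have q: "(exp (\<mu> * real n) - 1) / (exp \<mu> - 1) > 0" by (rule q_pos[OF assms])
  have d: "exp \<mu> - 1 \<noteq> 0" using assms by simp
  have "exp (mloc \<mu> n) + 1 = (exp (\<mu> * real (Suc n)) - 1) / (exp \<mu> - 1)"
    unfolding mloc_def exp_add exp_suc using q d by (simp add: field_simps del: of_nat_Suc)
  thus ?thesis unfolding mloc_def by simp
qed

lemma alg_B:
  assumes mu: "\<mu> \<noteq> 0" and n: "1 \<le> n"
  defines "A \<equiv> exp (mloc \<mu> n)"
  shows "1 + (A / (A + 1)) powr \<alpha> * Ssum \<alpha> \<mu> n = Ssum \<alpha> \<mu> (Suc n)"
proof -
  define u where "u j = exp (\<mu> * real j)" for j
  have u1: "u 1 = exp \<mu>" by (simp add: u_def)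
  have uS: "u (Suc j) = exp \<mu> * u j" for j unfolding u_def by (rule exp_suc)
  have d: "exp \<mu> - 1 \<noteq> 0" using mu by simp
  have un: "u n - 1 \<noteq> 0" using mu n by (simp add: u_def)
  have uSn: "u (Suc n) - 1 \<noteq> 0" using mu n by (simp add: u_def del: of_nat_Suc)
  have q: "(u n - 1) / (exp \<mu> - 1) > 0" using q_pos[OF mu n] by (simp add: u_def)
  have A: "A = exp \<mu> * (u n - 1) / (exp \<mu> - 1)"
    unfolding A_def mloc_def exp_add using q by (simp add: u_def)
  have uSn': "exp \<mu> * u n - 1 \<noteq> 0" using uSn uS by simp
  have A1': "(A + 1) * (exp \<mu> - 1) = exp \<mu> * u n - 1"
  proof -
    have "(A + 1) * (exp \<mu> - 1) = A * (exp \<mu> - 1) + (exp \<mu> - 1)" by (simp add: distrib_right)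
    also have "A * (exp \<mu> - 1) = exp \<mu> * (u n - 1)" unfolding A using d by simp
    finally show ?thesis by (simp add: algebra_simps)
  qed
  have A1: "A + 1 = (exp \<mu> * u n - 1) / (exp \<mu> - 1)" using A1' d by (simp add: eq_divide_eq)
  have b: "A / (A + 1) = exp \<mu> * (u n - 1) / (u (Suc n) - 1)"
  proof -
    have "A / (A + 1) = A / ((exp \<mu> * u n - 1) / (exp \<mu> - 1))" by (simp only: A1)
    also have "\<dots> = (exp \<mu> * (u n - 1) / (exp \<mu> - 1)) / ((exp \<mu> * u n - 1) / (exp \<mu> - 1))" by (simp only: A)
    also have "\<dots> = exp \<mu> * (u n - 1) / (exp \<mu> * u n - 1)" using d by simp
    finally show ?thesis by (simp add: uS)
  qed
  have bnn: "A / (A + 1) \<ge> 0" unfolding A_def by (simp add: add_pos_pos less_imp_le)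
  have T: "1 - (u j - 1) / (u m - 1) = (u m - u j) / (u m - 1)" if "u m - 1 \<noteq> 0" for j m
    using that by (simp add: field_simps)
  have Sn: "Ssum \<alpha> \<mu> n = 1 + (\<Sum>j=1..n-1. ((u n - u j) / (u n - 1)) powr \<alpha>)"
    unfolding Ssum_def using T[OF un] by (simp add: u_def)
  have SSn: "Ssum \<alpha> \<mu> (Suc n) = 1 + (\<Sum>j=1..n. ((u (Suc n) - u j) / (u (Suc n) - 1)) powr \<alpha>)"
    unfolding Ssum_def using T[OF uSn] by (simp add: u_def del: of_nat_Suc)
  have b1: "A / (A + 1) = (u (Suc n) - u 1) / (u (Suc n) - 1)"
    unfolding b uS u1 by (simp add: algebra_simps)
  have bj: "A / (A + 1) * ((u n - u j) / (u n - 1)) = (u (Suc n) - u (Suc j)) / (u (Suc n) - 1)" for j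
  proof -
    have "exp \<mu> * (u n - 1) / (exp \<mu> * u n - 1) * ((u n - u j) / (u n - 1))
       = ((u n - 1) * (exp \<mu> * (u n - u j))) / ((u n - 1) * (exp \<mu> * u n - 1))"
      by (simp add: times_divide_times_eq algebra_simps)
    also have "\<dots> = exp \<mu> * (u n - u j) / (exp \<mu> * u n - 1)"
      using un by (rule mult_divide_mult_cancel_left)
    finally show ?thesis unfolding b uS by (simp add: algebra_simps)
  qed
  have "(A / (A + 1)) powr \<alpha> * Ssum \<alpha> \<mu> n
      = (A / (A + 1)) powr \<alpha> + (\<Sum>j=1..n-1. (A / (A + 1) * ((u n - u j) / (u n - 1))) powr \<alpha>)"
    unfolding Sn distrib_left sum_distrib_left
  proof (intro arg_cong2[where f="(+)"] sum.cong refl)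
    fix j assume "j \<in> {1..n-1}"
    hence "(u n - u j) / (u n - 1) \<ge> 0" using ratio_nonneg[OF mu n, of j] by (auto simp: u_def)
    thus "(A / (A + 1)) powr \<alpha> * ((u n - u j) / (u n - 1)) powr \<alpha> = (A / (A + 1) * ((u n - u j) / (u n - 1))) powr \<alpha>"
      using bnn by (simp only: powr_mult)
  qed simp
  also have "\<dots> = (\<Sum>j=1..n. ((u (Suc n) - u j) / (u (Suc n) - 1)) powr \<alpha>)"
  proof -
    obtain k where k: "n = Suc k" using n by (cases n) auto
    have "(\<Sum>j=1..n. ((u (Suc n) - u j) / (u (Suc n) - 1)) powr \<alpha>)
       = ((u (Suc n) - u 1) / (u (Suc n) - 1)) powr \<alpha> + (\<Sum>j=Suc 1..Suc k. ((u (Suc n) - u j) / (u (Suc n) - 1)) powr \<alpha>)"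
      unfolding k by (subst sum.atLeast_Suc_atMost) auto
    also have "(\<Sum>j=Suc 1..Suc k. ((u (Suc n) - u j) / (u (Suc n) - 1)) powr \<alpha>)
      = (\<Sum>j=1..k. ((u (Suc n) - u (Suc j)) / (u (Suc n) - 1)) powr \<alpha>)"
      by (simp only: sum.atLeast_Suc_atMost_Suc_shift comp_def)
    finally have e1: "(\<Sum>j=1..n. ((u (Suc n) - u j) / (u (Suc n) - 1)) powr \<alpha>) = ((u (Suc n) - u 1) / (u (Suc n) - 1)) powr \<alpha> + (\<Sum>j=1..k. ((u (Suc n) - u (Suc j)) / (u (Suc n) - 1)) powr \<alpha>)" .
    have nk: "n - 1 = k" using k by simp
    show ?thesis unfolding bj unfolding b1 e1 nk by (rule refl)
  qed
  finally show ?thesis unfolding SSn by simp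
qed




lemma law_lin:
  fixes n :: nat and L :: "nat \<Rightarrow> 'a \<Rightarrow> real"
  assumes ps: "prob_space M" and a: "\<alpha> \<noteq> 1" "0 < \<alpha>" "0 < \<sigma>" "0 < n"
    and ind: "prob_space.indep_vars M (\<lambda>_. borel) L {..<n}"
    and law: "\<And>j. j < n \<Longrightarrow> has_stable_law M (L j) \<alpha> \<beta> \<sigma> \<mu>"
    and w: "\<And>j. j < n \<Longrightarrow> 0 < w j"
    and f: "\<And>\<omega>. \<omega> \<in> space M \<Longrightarrow> f \<omega> = (\<Sum>j<n. w j * L j \<omega>) + C"
  shows "has_stable_law M f \<alpha> \<beta> ((\<sigma> powr \<alpha> * (\<Sum>j<n. w j powr \<alpha>)) powr (1/\<alpha>)) (\<mu> * (\<Sum>j<n. w j) + C)"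
proof -
  have [measurable]: "\<And>j. j < n \<Longrightarrow> L j \<in> borel_measurable M"
    using law unfolding has_stable_law_def by auto
  have gm: "(\<lambda>\<omega>. (\<Sum>j<n. w j * L j \<omega>) + C) \<in> borel_measurable M" by measurable
  have fm: "f \<in> borel_measurable M" using gm by (subst measurable_cong[OF f]) auto
  have dd: "distr M borel f = distr M borel (\<lambda>\<omega>. (\<Sum>j<n. w j * L j \<omega>) + C)"
    by (rule distr_cong) (auto simp: f)
  have Spos: "(\<Sum>j<n. w j powr \<alpha>) > 0"
  proof (rule sum_pos)
    show "finite {..<n}" by simp
    show "{..<n} \<noteq> {}" using a(4) by auto
    fix i assume "i \<in> {..<n}"
    then show "0 < w i powr \<alpha>" using w[of i] by simp
  qed
  define s' where "s' = (\<sigma> powr \<alpha> * (\<Sum>j<n. w j powr \<alpha>)) powr (1/\<alpha>)"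
  have s'pos: "s' > 0" unfolding s'_def using Spos a by simp
  have s'a: "s' powr \<alpha> = (\<Sum>j<n. \<sigma> powr \<alpha> * w j powr \<alpha>)"
    unfolding s'_def using a Spos by (simp add: powr_powr sum_distrib_left[symmetric])
  have "char (distr M borel f) \<theta> = stable_cf \<alpha> \<beta> s' (\<mu> * (\<Sum>j<n. w j) + C) \<theta>" for \<theta>
  proof -
    have "char (distr M borel f) \<theta> = iexp (\<theta> * C) * (\<Prod>j<n. char (distr M borel (L j)) (w j * \<theta>))"
      unfolding dd by (rule prob_space.lin_char[OF ps ind])
    also have "(\<Prod>j<n. char (distr M borel (L j)) (w j * \<theta>)) = (\<Prod>j<n. E \<alpha> \<beta> (\<sigma> powr \<alpha> * w j powr \<alpha>) (w j * \<mu>) \<theta>)"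
      using law w a by (intro prod.cong refl) (simp add: has_stable_law_def cf_scaled)
    also have "\<dots> = E \<alpha> \<beta> (\<Sum>j<n. \<sigma> powr \<alpha> * w j powr \<alpha>) (\<Sum>j<n. w j * \<mu>) \<theta>"
      by (rule E_prod)
    also have "iexp (\<theta> * C) * \<dots> = E \<alpha> \<beta> (\<Sum>j<n. \<sigma> powr \<alpha> * w j powr \<alpha>) ((\<Sum>j<n. w j * \<mu>) + C) \<theta>"
      by (rule E_shift)
    also have "\<dots> = stable_cf \<alpha> \<beta> s' (\<mu> * (\<Sum>j<n. w j) + C) \<theta>"
      using cf_E[OF a(1) s'pos] s'a by (simp add: sum_distrib_left mult.commute)
    finally show ?thesis .
  qed
  thus ?thesis using fm unfolding has_stable_law_def s'_def by simp
qed

lemma loc_eq: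
  assumes "has_stable_law M Z \<alpha> \<beta> \<sigma> \<mu>" "\<alpha> \<noteq> 1" "0 < \<alpha>" "\<alpha> \<le> 2" "-1 \<le> \<beta>" "\<beta> \<le> 1" "0 < \<sigma>"
  shows "stable_location M Z = \<mu>"
  unfolding stable_location_def
proof (rule the_equality)
  show "\<exists>\<alpha> \<beta> \<sigma>. 0 < \<alpha> \<and> \<alpha> \<le> 2 \<and> - 1 \<le> \<beta> \<and> \<beta> \<le> 1 \<and> 0 < \<sigma> \<and> has_stable_law M Z \<alpha> \<beta> \<sigma> \<mu>"
    using assms by blast
next
  fix \<mu>' assume "\<exists>\<alpha> \<beta> \<sigma>. 0 < \<alpha> \<and> \<alpha> \<le> 2 \<and> - 1 \<le> \<beta> \<and> \<beta> \<le> 1 \<and> 0 < \<sigma> \<and> has_stable_law M Z \<alpha> \<beta> \<sigma> \<mu>'"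
  then obtain \<alpha>' \<beta>' \<sigma>' where h: "0 < \<sigma>'" "has_stable_law M Z \<alpha>' \<beta>' \<sigma>' \<mu>'" by blast
  have "\<And>\<theta>. stable_cf \<alpha> \<beta> \<sigma> \<mu> \<theta> = stable_cf \<alpha>' \<beta>' \<sigma>' \<mu>' \<theta>"
    using h(2) assms(1) unfolding has_stable_law_def by metis
  from cf_loc_unique[OF assms(2,3,7) h(1) this] show "\<mu>' = \<mu>" by simp
qed




lemma has_stable_law_cong:
  assumes "\<And>\<omega>. \<omega> \<in> space M \<Longrightarrow> f \<omega> = g \<omega>"
  shows "has_stable_law M f \<alpha> \<beta> \<sigma> \<mu> = has_stable_law M g \<alpha> \<beta> \<sigma> \<mu>"
proof -
  have "distr M borel f = distr M borel g" by (rule distr_cong) (auto simp: assms)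
  moreover have "f \<in> borel_measurable M \<longleftrightarrow> g \<in> borel_measurable M" by (rule measurable_cong) (simp add: assms)
  ultimately show ?thesis unfolding has_stable_law_def by simp
qed

lemma Ssum_pos: "Ssum \<alpha> \<mu> n > 0"
proof -
  have "(\<Sum>j::nat=1..n-1. (1 - (exp (\<mu> * real j) - 1) / (exp (\<mu> * real n) - 1)) powr \<alpha>) \<ge> 0"
    by (intro sum_nonneg) simp
  thus ?thesis unfolding Ssum_def by linarith
qed

theorem theorem2:
  fixes M :: "'w measure" and X :: "real \<Rightarrow> 'w \<Rightarrow> real" and a :: "nat \<Rightarrow> real"
    and \<alpha> \<beta> \<sigma> \<mu> :: real
  assumes "prob_space M"
    and "0 < \<alpha>" "\<alpha> \<le> 2" "-1 \<le> \<beta>" "\<beta> \<le> 1" "0 < \<sigma>"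
    and "\<alpha> \<noteq> 1" "\<mu> \<noteq> 0"
    \<comment> \<open>X is a positive process and log X is a Levy process with stable increments\<close>
    and pos: "\<And>t \<omega>. 0 \<le> t \<Longrightarrow> \<omega> \<in> space M \<Longrightarrow> 0 < X t \<omega>"
    and meas: "\<And>t. 0 \<le> t \<Longrightarrow> X t \<in> borel_measurable M"
    and cadlag: "\<And>\<omega>. \<omega> \<in> space M \<Longrightarrow>
         (\<forall>t\<ge>0. continuous (at_right t) (\<lambda>s. ln (X s \<omega>))) \<and>
         (\<forall>t>0. \<exists>l. ((\<lambda>s. ln (X s \<omega>)) \<longlongrightarrow> l) (at_left t))"
    and indep_incr: "\<And>(ts :: nat \<Rightarrow> real) n. 0 \<le> ts 0 \<Longrightarrow> strict_mono ts \<Longrightarrow>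
         prob_space.indep_vars M (\<lambda>_. borel)
           (\<lambda>i \<omega>. ln (X (ts (Suc i)) \<omega>) - ln (X (ts i) \<omega>)) {..<n}"
    and stable_incr: "\<And>s t. 0 \<le> s \<Longrightarrow> s < t \<Longrightarrow>
         has_stable_law M (\<lambda>\<omega>. ln (X t \<omega> / X s \<omega>)) \<alpha> \<beta> (\<sigma> * (t - s) powr (1 / \<alpha>)) (\<mu> * (t - s))"
    \<comment> \<open>c_k = 1, t_k = k, and a_k = exp(location parameter of log Z_k), k >= 1\<close>
    and a_rec: "\<And>k. 1 \<le> k \<Longrightarrow>
         a k = exp (stable_location M (\<lambda>\<omega>. ln (Zw X real (\<lambda>_. 1) a k \<omega>)))"
  shows "\<forall>k::nat\<ge>1.
     (AE \<omega> in M. Zw X real (\<lambda>_. 1) a k \<omega> \<le> Yw X real (\<lambda>_. 1) k \<omega>) \<and>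
     has_stable_law M (\<lambda>\<omega>. ln (Zw X real (\<lambda>_. 1) a k \<omega>)) \<alpha> \<beta>
       ((\<sigma> powr \<alpha> * (1 + (\<Sum>j::nat=1..k-1.
            (1 - (exp (\<mu> * real j) - 1) / (exp (\<mu> * real k) - 1)) powr \<alpha>))) powr (1 / \<alpha>))
       (\<mu> + ln ((exp (\<mu> * real k) - 1) / (exp \<mu> - 1)))"
proof -
  note ps = assms(1)
  note pa = assms(2-8)
  let ?Z = "Zw X real (\<lambda>_. 1) a"
  let ?Y = "Yw X real (\<lambda>_. 1)"
  define L where "L j \<omega> = ln (X (real (Suc j)) \<omega>) - ln (X (real j) \<omega>)" for j \<omega>
  have sm: "strict_mono (real :: nat \<Rightarrow> real)" by (rule strict_monoI) simp
  have ind: "prob_space.indep_vars M (\<lambda>_. borel) L {..<n}" for n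
    using indep_incr[of real n, OF _ sm] unfolding L_def by simp
  have lawL: "has_stable_law M (L j) \<alpha> \<beta> \<sigma> \<mu>" for j
  proof -
    have "has_stable_law M (\<lambda>\<omega>. ln (X (real (Suc j)) \<omega> / X (real j) \<omega>)) \<alpha> \<beta> \<sigma> \<mu>"
      using stable_incr[of "real j" "real (Suc j)"] by simp
    moreover have "ln (X (real (Suc j)) \<omega> / X (real j) \<omega>) = L j \<omega>" if "\<omega> \<in> space M" for \<omega>
    proof -
      have "X (real (Suc j)) \<omega> > 0" "X (real j) \<omega> > 0" using pos[OF _ that] by auto
      thus ?thesis unfolding L_def using ln_div[of "X (real (Suc j)) \<omega>" "X (real j) \<omega>"] by simp
    qed
    ultimately show ?thesis using has_stable_law_cong[of M "L j" "\<lambda>\<omega>. ln (X (real (Suc j)) \<omega> / X (real j) \<omega>)"] by simp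
  qed
  define Q where "Q k \<longleftrightarrow> (\<forall>\<omega>\<in>space M. 0 < ?Z (Suc k) \<omega> \<and> ?Z (Suc k) \<omega> \<le> ?Y (Suc k) \<omega>) \<and>
     (\<exists>w C. (\<forall>j<Suc k. 0 < w j) \<and> (\<forall>\<omega>\<in>space M. ln (?Z (Suc k) \<omega>) = (\<Sum>j<Suc k. w j * L j \<omega>) + C)
        \<and> (\<Sum>j<Suc k. w j powr \<alpha>) = Ssum \<alpha> \<mu> (Suc k) \<and> \<mu> * (\<Sum>j<Suc k. w j) + C = mloc \<mu> (Suc k))" for k
  have lawZ: "has_stable_law M (\<lambda>\<omega>. ln (?Z (Suc k) \<omega>)) \<alpha> \<beta> ((\<sigma> powr \<alpha> * Ssum \<alpha> \<mu> (Suc k)) powr (1/\<alpha>)) (mloc \<mu> (Suc k))"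
    if qk: "Q k" for k
  proof -
    obtain w C where w: "\<forall>j<Suc k. 0 < w j" "\<forall>\<omega>\<in>space M. ln (?Z (Suc k) \<omega>) = (\<Sum>j<Suc k. w j * L j \<omega>) + C"
        "(\<Sum>j<Suc k. w j powr \<alpha>) = Ssum \<alpha> \<mu> (Suc k)" "\<mu> * (\<Sum>j<Suc k. w j) + C = mloc \<mu> (Suc k)"
      using qk unfolding Q_def by blast
    have "has_stable_law M (\<lambda>\<omega>. ln (?Z (Suc k) \<omega>)) \<alpha> \<beta> ((\<sigma> powr \<alpha> * (\<Sum>j<Suc k. w j powr \<alpha>)) powr (1/\<alpha>)) (\<mu> * (\<Sum>j<Suc k. w j) + C)"
      by (rule law_lin[OF ps pa(6) pa(1) pa(5) zero_less_Suc ind lawL]) (use w in auto)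
    thus ?thesis using w by simp
  qed
  have Q: "Q k" for k
  proof (induction k)
    case 0
    have Z1: "?Z (Suc 0) \<omega> = X (real (Suc 0)) \<omega> / X (real 0) \<omega>" for \<omega> by (simp add: ret_def)
    have p01: "X (real (Suc 0)) \<omega> > 0" "X (real 0) \<omega> > 0" if "\<omega> \<in> space M" for \<omega>
      using pos[OF _ that] by auto
    have h1: "\<forall>\<omega>\<in>space M. 0 < ?Z (Suc 0) \<omega> \<and> ?Z (Suc 0) \<omega> \<le> ?Y (Suc 0) \<omega>"
    proof
      fix \<omega> assume "\<omega> \<in> space M"
      from p01[OF this] show "0 < ?Z (Suc 0) \<omega> \<and> ?Z (Suc 0) \<omega> \<le> ?Y (Suc 0) \<omega>"
        unfolding Z1 by (simp add: ret_def del: of_nat_Suc of_nat_0)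
    qed
    have h2: "\<forall>\<omega>\<in>space M. ln (?Z (Suc 0) \<omega>) = (\<Sum>j<Suc 0. (\<lambda>_. 1::real) j * L j \<omega>) + 0"
    proof
      fix \<omega> assume "\<omega> \<in> space M"
      from p01[OF this] show "ln (?Z (Suc 0) \<omega>) = (\<Sum>j<Suc 0. (\<lambda>_. 1::real) j * L j \<omega>) + 0"
        unfolding Z1 L_def using ln_div[of "X (real (Suc 0)) \<omega>" "X (real 0) \<omega>"] by simp
    qed
    have h3: "(\<Sum>j<Suc 0. (\<lambda>_. 1::real) j powr \<alpha>) = Ssum \<alpha> \<mu> (Suc 0)" by (simp add: Ssum_def)
    have h4: "\<mu> * (\<Sum>j<Suc 0. (\<lambda>_. 1::real) j) + 0 = mloc \<mu> (Suc 0)" using pa by (simp add: mloc_def)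
    show ?case unfolding Q_def using h1 h2 h3 h4 by (intro conjI exI[of _ "\<lambda>_. 1"] exI[of _ 0]) auto
  next
    case (Suc k)
    obtain w C where w: "\<forall>j<Suc k. 0 < w j" "\<forall>\<omega>\<in>space M. ln (?Z (Suc k) \<omega>) = (\<Sum>j<Suc k. w j * L j \<omega>) + C"
        "(\<Sum>j<Suc k. w j powr \<alpha>) = Ssum \<alpha> \<mu> (Suc k)" "\<mu> * (\<Sum>j<Suc k. w j) + C = mloc \<mu> (Suc k)"
      using Suc.IH unfolding Q_def by blast
    have ZY: "\<forall>\<omega>\<in>space M. 0 < ?Z (Suc k) \<omega> \<and> ?Z (Suc k) \<omega> \<le> ?Y (Suc k) \<omega>"
      using Suc.IH unfolding Q_def by blast
    have spos: "(\<sigma> powr \<alpha> * Ssum \<alpha> \<mu> (Suc k)) powr (1/\<alpha>) > 0"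
      using Ssum_pos[of \<alpha> \<mu> "Suc k"] pa by simp
    define A where "A = exp (mloc \<mu> (Suc k))"
    have Apos: "A > 0" by (simp add: A_def)
    have aA: "a (Suc k) = A"
      using a_rec[of "Suc k"] loc_eq[OF lawZ[OF Suc.IH] pa(6) pa(1) pa(2) pa(3) pa(4) spos] by (simp add: A_def)
    define b where "b = A / (A + 1)"
    have b01: "0 \<le> b" "b \<le> 1" using Apos by (auto simp: b_def)
    have bA: "(A + 1) * b = A" using Apos by (simp add: b_def)
    define w' where "w' j = (if j < Suc k then b * w j else 1)" for j
    define C' where "C' = ln (A + 1) + b * (C - mloc \<mu> (Suc k))"
    have main: "0 < ?Z (Suc (Suc k)) \<omega> \<and> ?Z (Suc (Suc k)) \<omega> \<le> ?Y (Suc (Suc k)) \<omega> \<and>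
        ln (?Z (Suc (Suc k)) \<omega>) = (\<Sum>j<Suc (Suc k). w' j * L j \<omega>) + C'" if om: "\<omega> \<in> space M" for \<omega>
    proof -
      define r where "r = X (real (Suc (Suc k))) \<omega> / X (real (Suc k)) \<omega>"
      have x1: "X (real (Suc (Suc k))) \<omega> > 0" "X (real (Suc k)) \<omega> > 0" using pos[OF _ om] by auto
      have rpos: "r > 0" unfolding r_def using x1 by simp
      have lr: "ln r = L (Suc k) \<omega>" unfolding r_def L_def using x1 by (simp add: ln_div)
      define z where "z = ?Z (Suc k) \<omega>"
      have zpos: "z > 0" and zy: "z \<le> ?Y (Suc k) \<omega>" using ZY om unfolding z_def by auto
      have ZS: "?Z (Suc (Suc k)) \<omega> = r * (A + 1) * (z / A) powr b"
        unfolding Zw.simps z_def r_def b_def aA by (simp add: ret_def del: of_nat_Suc)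
      have YS: "?Y (Suc (Suc k)) \<omega> = r * (?Y (Suc k) \<omega> + 1)"
        unfolding Yw.simps r_def by (simp add: ret_def del: of_nat_Suc)
      have pp: "(z / A) powr b > 0" using zpos Apos by simp
      have Zp: "0 < ?Z (Suc (Suc k)) \<omega>" unfolding ZS using rpos Apos pp by simp
      have young: "(z / A) powr b * 1 powr (1 - b) \<le> b * (z / A) + (1 - b) * 1"
        by (rule Youngs_inequality_0) (use b01 zpos Apos in auto)
      have "(A + 1) * (z / A) powr b \<le> (A + 1) * (b * (z / A) + (1 - b))"
        using young Apos by (intro mult_left_mono) auto
      also have "\<dots> = z + 1" using bA Apos by (simp add: b_def field_simps)
      finally have "(A + 1) * (z / A) powr b \<le> z + 1" .
      hence "?Z (Suc (Suc k)) \<omega> \<le> r * (z + 1)" unfolding ZS using rpos by (simp add: mult.assoc)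
      also have "\<dots> \<le> ?Y (Suc (Suc k)) \<omega>" unfolding YS using rpos zy by simp
      finally have Zle: "?Z (Suc (Suc k)) \<omega> \<le> ?Y (Suc (Suc k)) \<omega>" .
      have "ln (?Z (Suc (Suc k)) \<omega>) = ln r + ln (A + 1) + b * (ln z - ln A)"
        unfolding ZS using rpos Apos zpos pp by (simp add: ln_mult ln_div)
      also have "ln z = (\<Sum>j<Suc k. w j * L j \<omega>) + C" using w(2) om unfolding z_def by blast
      also have "ln A = mloc \<mu> (Suc k)" by (simp add: A_def)
      also have "ln r + ln (A + 1) + b * ((\<Sum>j<Suc k. w j * L j \<omega>) + C - mloc \<mu> (Suc k))
          = (\<Sum>j<Suc (Suc k). w' j * L j \<omega>) + C'"
      proof -
        have "(\<Sum>j<Suc (Suc k). w' j * L j \<omega>) = (\<Sum>j<Suc k. w' j * L j \<omega>) + L (Suc k) \<omega>"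
          by (simp add: w'_def)
        also have "(\<Sum>j<Suc k. w' j * L j \<omega>) = b * (\<Sum>j<Suc k. w j * L j \<omega>)"
          unfolding sum_distrib_left by (rule sum.cong) (auto simp: w'_def)
        finally show ?thesis unfolding C'_def lr by (simp add: algebra_simps)
      qed
      finally show ?thesis using Zp Zle by simp
    qed
    have s1: "(\<Sum>j<Suc (Suc k). w' j powr \<alpha>) = Ssum \<alpha> \<mu> (Suc (Suc k))"
    proof -
      have "(\<Sum>j<Suc (Suc k). w' j powr \<alpha>) = (\<Sum>j<Suc k. w' j powr \<alpha>) + 1"
        by (simp add: w'_def)
      also have "(\<Sum>j<Suc k. w' j powr \<alpha>) = b powr \<alpha> * (\<Sum>j<Suc k. w j powr \<alpha>)"
        unfolding sum_distrib_left by (rule sum.cong) (use b01 w(1) in \<open>auto simp: w'_def powr_mult\<close>)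
      also have "b powr \<alpha> * (\<Sum>j<Suc k. w j powr \<alpha>) + 1 = Ssum \<alpha> \<mu> (Suc (Suc k))"
        using alg_B[OF pa(7), of "Suc k" \<alpha>] unfolding w(3) b_def A_def by simp
      finally show ?thesis .
    qed
    have s2: "\<mu> * (\<Sum>j<Suc (Suc k). w' j) + C' = mloc \<mu> (Suc (Suc k))"
    proof -
      have "(\<Sum>j<Suc (Suc k). w' j) = (\<Sum>j<Suc k. w' j) + 1" by (simp add: w'_def)
      also have "(\<Sum>j<Suc k. w' j) = b * (\<Sum>j<Suc k. w j)"
        unfolding sum_distrib_left by (rule sum.cong) (auto simp: w'_def)
      finally have "\<mu> * (\<Sum>j<Suc (Suc k). w' j) + C' = b * (\<mu> * (\<Sum>j<Suc k. w j) + C - mloc \<mu> (Suc k)) + \<mu> + ln (A + 1)"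
        unfolding C'_def by (simp add: algebra_simps)
      also have "\<dots> = \<mu> + ln (exp (mloc \<mu> (Suc k)) + 1)" using w(4) by (simp add: A_def)
      also have "\<dots> = mloc \<mu> (Suc (Suc k))" by (rule alg_A[OF pa(7)]) simp
      finally show ?thesis .
    qed
    have wpos: "\<forall>j<Suc (Suc k). 0 < w' j"
      using w(1) b01 Apos by (auto simp: w'_def b_def)
    show ?case unfolding Q_def
      using main s1 s2 wpos by (intro conjI exI[of _ w'] exI[of _ C']) auto
  qed
  show ?thesis
  proof (intro allI impI)
    fix k :: nat assume "1 \<le> k"
    then obtain k' where k: "k = Suc k'" by (cases k) auto
    have le: "\<forall>\<omega>\<in>space M. ?Z k \<omega> \<le> ?Y k \<omega>" using Q[of k'] unfolding Q_def k by blast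
    show "(AE \<omega> in M. ?Z k \<omega> \<le> ?Y k \<omega>) \<and> has_stable_law M (\<lambda>\<omega>. ln (?Z k \<omega>)) \<alpha> \<beta>
       ((\<sigma> powr \<alpha> * (1 + (\<Sum>j::nat=1..k-1.
            (1 - (exp (\<mu> * real j) - 1) / (exp (\<mu> * real k) - 1)) powr \<alpha>))) powr (1 / \<alpha>))
       (\<mu> + ln ((exp (\<mu> * real k) - 1) / (exp \<mu> - 1)))"
      using lawZ[OF Q[of k']] le unfolding k Ssum_def mloc_def by (simp add: AE_I2)
  qed
qed


end
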